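(* Let $T>0$, $0\leq t<T$, $\tau=T-t$, $r\geq 0$, $\sigma>0$, $n\in\mathbb{N}$, and let $S_t>0$ and $M_t>0$ with $M_t\geq S_t$. Put $u=e^{\sigma\sqrt{\tau/n}}$, $d=u^{-1}$, $q=\frac{u-e^{-r\tau/n}}{u-d}$ and $j_0=\frac{\log(M_t/S_t)}{\sigma\sqrt{\tau/n}}$. Let $\Lambda^{j_0}_{j,k,n}$ and $J$ be as in the context, and define the discrete (Cheuk–Vorst) price of the European lookback put with floating strike at time $t$ by \[ P^{fl}_n(t) = S_t \sum_{j\in J} (u^{j}-1)\sum_{k=0}^n \Lambda^{j_0}_{j,k,n}\, (1-q)^{k}q^{n-k}. \] Then $P^{fl}_n(t) = S_t(V_1-V_2+V_3)$, where, with $k_{\min}=n-\lfloor \frac{n+j_0}{2}\rfloor$ and $k_{\max}=k_{\max}(j)=\lfloor\frac{n-\lfloor j_0\rfloor-1+j}{2}\rfloor$, \begin{align*} V_1&=\sum_{k=k_{\min}}^{n}(u^{j_0+2k-n}-1) \binom{n}{k}(1-q)^{k}q^{n-k},\\ V_2&=\sum_{k=k_{\min}}^{n-\lfloor j_0\rfloor-1} (u^{j_0+2k-n}-1)\binom{n}{k+\lfloor j_0\rfloor+1}(1-q)^{k}q^{n-k},\\ V_3&=\sum_{j=0}^{n-\lfloor j_0\rfloor-1}(u^{j}-1) \sum_{k=j}^{k_{\max}}\Big[\binom{n}{k-j}-\binom{n}{k-j-1}\Big] (1-q)^{k}q^{n-k}. \end{align*}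
   Context: Here $S_t$ is the current price of the underlying and $M_t=\max_{t^*\leq t}S_{t^*}$ its running maximum since emission. Consider the directed graph with initial node $(0,j_0)$ in which, from each node $(m,j_m)$ with $0\leq m<n$, there are exactly two edges: an "up" edge to $(m+1,j_m+1)$ and a "down" edge to $(m+1,\max(j_m-1,0))$. $\Lambda^{j_0}_{j,k,n}$ is the number of paths from $(0,j_0)$ to $(n,j)$ with exactly $k$ up jumps, and $J$ is the set of levels $j$ such that $(n,j)$ is reachable from $(0,j_0)$. $\lfloor x\rfloor$ is the integer part; binomial coefficients $\binom{n}{i}$ are $0$ for $i<0$ or $i>n$. *)

theory Defs
  imports Complex_Main
begin

text \<open>Paths in the directed graph: a path of length n from (0,j0) is a list of
  n moves, True = up edge, False = down edge. Levels are real numbers, since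
  j0 = log(M/S)/(sigma*sqrt(tau/n)) need not be an integer.\<close>

fun level :: "real \<Rightarrow> bool list \<Rightarrow> real" where
  "level j [] = j"
| "level j (b # bs) = level (if b then j + 1 else max (j - 1) 0) bs"

definition Lambda :: "real \<Rightarrow> real \<Rightarrow> nat \<Rightarrow> nat \<Rightarrow> nat" where
  "Lambda j0 j k n =
     card {ps :: bool list. length ps = n \<and> count_list ps True = k \<and> level j0 ps = j}"

definition reachJ :: "real \<Rightarrow> nat \<Rightarrow> real set" where
  "reachJ j0 n = {level j0 ps | ps :: bool list. length ps = n}"

definition binom :: "nat \<Rightarrow> int \<Rightarrow> real" where
  "binom n i = (if i < 0 \<or> i > int n then 0 else real (n choose nat i))"

end

theory Submission
  imports Defs
begin


fun sm :: "bool list \<Rightarrow> int" where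
  "sm [] = 0" | "sm (b # bs) = (if b then 1 else -1) + sm bs"
fun mp :: "bool list \<Rightarrow> int" where
  "mp [] = 0" | "mp (b # bs) = min 0 ((if b then 1 else -1) + mp bs)"

lemma mp_le0: "mp ps \<le> 0"
  by (cases ps) auto

lemma level_eq: "x \<ge> 0 \<Longrightarrow> level x ps = max (x + real_of_int (sm ps)) (real_of_int (sm ps - mp ps))"
proof (induction ps arbitrary: x)
  case Nil then show ?case by simp
next
  case (Cons b bs)
  have m: "mp bs \<le> 0" by (rule mp_le0)
  show ?case
  proof (cases b)
    case True
    have "level x (b # bs) = level (x+1) bs" using True by simp
    also have "\<dots> = max (x + 1 + real_of_int (sm bs)) (real_of_int (sm bs - mp bs))"
      using Cons by simp
    finally show ?thesis using True Cons.prems m by (auto simp: max_def min_def)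
  next
    case False
    have "level x (b # bs) = level (max (x-1) 0) bs" using False by simp
    also have "\<dots> = max (max (x-1) 0 + real_of_int (sm bs)) (real_of_int (sm bs - mp bs))"
      using Cons by simp
    finally show ?thesis using False Cons.prems m by (auto simp: max_def min_def)
  qed
qed

lemma sm_eq: "sm ps = 2 * int (count_list ps True) - int (length ps)"
  by (induction ps) auto

lemma count_le: "count_list ps x \<le> length ps"
  by (induction ps) auto

lemma mp_ge: "mp ps \<ge> int (count_list ps True) - int (length ps)"
  by (induction ps) (use count_le in fastforce)+

lemma finite_len: "finite {ps :: bool list. length ps = n}"
proof -
  have "finite {xs :: bool list. set xs \<subseteq> UNIV \<and> length xs = n}"
    by (rule finite_lists_length_eq) simp
  then show ?thesis by simp
qed

lemma finite_lenP: "finite {ps :: bool list. length ps = n \<and> P ps}"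
  by (rule finite_subset[OF _ finite_len[of n]]) auto

lemma card_split: "card {ps :: bool list. length ps = Suc n \<and> P ps}
   = card {bs. length bs = n \<and> P (True # bs)} + card {bs. length bs = n \<and> P (False # bs)}"
proof -
  have e: "{ps :: bool list. length ps = Suc n \<and> P ps}
     = Cons True ` {bs. length bs = n \<and> P (True # bs)} \<union> Cons False ` {bs. length bs = n \<and> P (False # bs)}"
  proof (rule set_eqI)
    fix ps :: "bool list"
    show "ps \<in> {ps. length ps = Suc n \<and> P ps} \<longleftrightarrow> ps \<in> Cons True ` {bs. length bs = n \<and> P (True # bs)} \<union> Cons False ` {bs. length bs = n \<and> P (False # bs)}"
    proof (cases ps)
      case (Cons a list)
      then show ?thesis by (cases a) auto
    qed auto
  qed
  show ?thesis unfolding e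
    by (subst card_Un_disjoint) (auto intro: finite_lenP simp: card_image)
qed

definition C :: "nat \<Rightarrow> nat \<Rightarrow> nat" where
  "C n k = card {ps :: bool list. length ps = n \<and> count_list ps True = k}"

lemma C_eq: "C n k = n choose k"
proof (induction n arbitrary: k)
  case 0
  have "{ps::bool list. length ps = 0 \<and> count_list ps True = k} = (if k = 0 then {[]} else {})" by auto
  then show ?case by (simp add: C_def)
next
  case (Suc n)
  show ?case
  proof (cases k)
    case 0
    have "C (Suc n) k = C n 0" unfolding C_def card_split using 0 by simp
    then show ?thesis using Suc 0 by simp
  next
    case (Suc k')
    have "C (Suc n) k = C n k' + C n k" unfolding C_def card_split using Suc by simp
    then show ?thesis using Suc.IH Suc by simp
  qed
qed

definition G :: "nat \<Rightarrow> nat \<Rightarrow> int \<Rightarrow> nat" where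
  "G n k c = card {ps :: bool list. length ps = n \<and> count_list ps True = k \<and> mp ps \<le> - c}"

lemma G_le0: "G n k c = n choose k" if "c \<le> 0"
proof -
  have "{ps :: bool list. length ps = n \<and> count_list ps True = k \<and> mp ps \<le> - c} = {ps. length ps = n \<and> count_list ps True = k}"
    using mp_le0 that by (smt (verit) Collect_cong)
  then show ?thesis by (simp add: G_def C_eq[symmetric] C_def)
qed


lemma binom_nat: "binom n (int m) = real (n choose m)"
  unfolding binom_def by simp

lemma binom_neg: "i < 0 \<Longrightarrow> binom n i = 0"
  unfolding binom_def by simp

lemma binom_pascal: "binom (Suc n) i = binom n (i - 1) + binom n i"
proof (cases "i < 0")
  case True then show ?thesis by (simp add: binom_neg)
next
  case False
  then obtain m where m: "i = int m" by (metis nonneg_int_cases not_less)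
  show ?thesis
  proof (cases m)
    case 0 then show ?thesis using m by (simp add: binom_def)
  next
    case (Suc m')
    have "i - 1 = int m'" using m Suc by simp
    then show ?thesis using m Suc by (simp only: binom_nat binomial_Suc_Suc of_nat_add)
  qed
qed

lemma binom_sym: "binom n i = binom n (int n - i)"
proof (cases "i < 0")
  case True then show ?thesis by (simp add: binom_neg binom_def)
next
  case False
  then obtain m where m: "i = int m" by (metis nonneg_int_cases not_less)
  show ?thesis
  proof (cases "m \<le> n")
    case True
    have e: "int n - i = int (n - m)" using m True by simp
    show ?thesis unfolding e unfolding m binom_nat by (simp add: binomial_symmetric[OF True])
  next
    case False
    then show ?thesis using m by (simp add: binom_nat binom_neg)
  qed
qed



lemma G_rec: "c \<ge> 1 \<Longrightarrow> G (Suc n) k c = (case k of 0 \<Rightarrow> 0 | Suc k' \<Rightarrow> G n k' (c+1)) + G n k (c-1)"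
proof -
  assume c: "c \<ge> 1"
  have "G (Suc n) k c = card {bs :: bool list. length bs = n \<and> count_list (True # bs) True = k \<and> mp (True # bs) \<le> - c}
     + card {bs :: bool list. length bs = n \<and> count_list (False # bs) True = k \<and> mp (False # bs) \<le> - c}"
    unfolding G_def by (rule card_split)
  also have "{bs :: bool list. length bs = n \<and> count_list (False # bs) True = k \<and> mp (False # bs) \<le> - c}
     = {bs. length bs = n \<and> count_list bs True = k \<and> mp bs \<le> - (c-1)}"
  proof -
    have "\<And>bs. mp (False # bs) = mp bs - 1" using mp_le0 by (simp add: min_def) (meson linorder_not_le mp_le0)
    then show ?thesis by auto
  qed
  also have "card {bs :: bool list. length bs = n \<and> count_list (True # bs) True = k \<and> mp (True # bs) \<le> - c}
     = (case k of 0 \<Rightarrow> 0 | Suc k' \<Rightarrow> G n k' (c+1))"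
  proof (cases k)
    case 0 then show ?thesis by simp
  next
    case (Suc k')
    have "{bs :: bool list. length bs = n \<and> count_list (True # bs) True = k \<and> mp (True # bs) \<le> - c}
       = {bs. length bs = n \<and> count_list bs True = k' \<and> mp bs \<le> - (c+1)}"
      using Suc c by auto
    then show ?thesis using Suc by (simp add: G_def)
  qed
  finally show ?thesis by (simp add: G_def)
qed

lemma G_eq: "1 \<le> c \<Longrightarrow> real (G n k c) = (if int n - 2 * int k \<ge> c then real (n choose k) else binom n (int k + c))"
proof (induction n arbitrary: k c)
  case 0
  have "{ps :: bool list. length ps = 0 \<and> count_list ps True = k \<and> mp ps \<le> - c} = {}"
    using 0 by auto
  then show ?case using 0 by (simp add: G_def binom_def)
next
  case (Suc n)
  have rec: "G (Suc n) k c = (case k of 0 \<Rightarrow> 0 | Suc k' \<Rightarrow> G n k' (c+1)) + G n k (c-1)"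
    using G_rec Suc.prems by blast
  have down: "real (G n k (c-1)) = (if int n - 2 * int k \<ge> c - 1 then real (n choose k) else binom n (int k + c - 1))"
  proof (cases "c = 1")
    case True then show ?thesis by (simp add: G_le0 binom_nat)
  next
    case False then show ?thesis using Suc.IH[of "c-1" k] Suc.prems by (simp add: add_diff_eq)
  qed
  show ?case
  proof (cases k)
    case 0
    have "real (G (Suc n) k c) = real (G n 0 (c-1))" using rec 0 by simp
    then show ?thesis using down 0 Suc.prems
      by (auto simp: binom_def)
  next
    case (Suc k')
    have up: "real (G n k' (c+1)) = (if int n - 2 * int k' \<ge> c + 1 then real (n choose k') else binom n (int k' + c + 1))"
      using Suc.IH[of "c+1" k'] Suc.prems by (simp add: add.assoc)
    have "real (G (Suc n) k c) = real (G n k' (c+1)) + real (G n k (c-1))" using rec Suc by simp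
    also have "\<dots> = (if int (Suc n) - 2 * int k \<ge> c then real (Suc n choose k) else binom (Suc n) (int k + c))"
      unfolding up down using Suc Suc.prems binom_pascal[of n "int k + c"]
      by (auto simp: binom_nat[symmetric] algebra_simps)
    finally show ?thesis .
  qed
qed



lemma mp_le_sm: "mp ps \<le> sm ps"
  by (induction ps) auto

lemma kmin_iff: "(int n - \<lfloor>(real n + j0)/2\<rfloor> \<le> int k) \<longleftrightarrow> \<not> (int n - 2*int k \<ge> \<lfloor>j0\<rfloor> + 1)"
proof -
  have "(int n - \<lfloor>(real n + j0)/2\<rfloor> \<le> int k) \<longleftrightarrow> int n - int k \<le> \<lfloor>(real n + j0)/2\<rfloor>" by linarith
  also have "\<dots> \<longleftrightarrow> real_of_int (int n - int k) \<le> (real n + j0)/2" by (rule le_floor_iff)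
  also have "\<dots> \<longleftrightarrow> real_of_int (int n - 2 * int k) \<le> j0" by (simp add: field_simps)
  also have "\<dots> \<longleftrightarrow> int n - 2 * int k \<le> \<lfloor>j0\<rfloor>" by (rule le_floor_iff[symmetric])
  finally show ?thesis by linarith
qed

lemma perk:
  assumes j0: "j0 \<ge> 0" and kn: "k \<le> n"
  shows "(\<Sum>ps\<in>{ps. length ps = n \<and> count_list ps True = k}. u powr level j0 ps - 1)
   = (if int n - \<lfloor>(real n + j0)/2\<rfloor> \<le> int k then (u powr (j0 + 2*real_of_int (int k) - real n) - 1) * (binom n (int k) - binom n (int k + \<lfloor>j0\<rfloor> + 1)) else 0)
   + (\<Sum>j\<in>{0..int n}. if 2*int k - int n + \<lfloor>j0\<rfloor> + 1 \<le> j then (u powr real_of_int j - 1) * (binom n (int k - j) - binom n (int k - j - 1)) else 0)"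
proof -
  define f where "f = \<lfloor>j0\<rfloor>"
  have f0: "f \<ge> 0" using j0 f_def by simp
  have fj: "real_of_int f \<le> j0" "j0 < real_of_int f + 1" using f_def by linarith+
  define Pk where "Pk = {ps :: bool list. length ps = n \<and> count_list ps True = k}"
  define A where "A = {ps \<in> Pk. mp ps \<ge> - f}"
  define B where "B = {ps \<in> Pk. mp ps \<le> - (f+1)}"
  have fPk: "finite Pk" unfolding Pk_def by (rule finite_lenP)
  have fA: "finite A" "finite B" using fPk unfolding A_def B_def by auto
  have PAB: "Pk = A \<union> B" "A \<inter> B = {}" unfolding A_def B_def by auto
  have smk: "\<And>ps. ps \<in> Pk \<Longrightarrow> sm ps = 2 * int k - int n" unfolding Pk_def by (simp add: sm_eq)
  have mpk: "\<And>ps. ps \<in> Pk \<Longrightarrow> mp ps \<ge> int k - int n" unfolding Pk_def using mp_ge by fastforce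
  have levA: "\<And>ps. ps \<in> A \<Longrightarrow> level j0 ps = j0 + 2*real_of_int (int k) - real n"
  proof -
    fix ps assume ps: "ps \<in> A"
    then have "ps \<in> Pk" "mp ps \<ge> -f" unfolding A_def by auto
    then show "level j0 ps = j0 + 2*real_of_int (int k) - real n"
      using level_eq[OF j0, of ps] smk[of ps] fj by (simp add: max_def)
  qed
  have cardB: "card B = G n k (f+1)" unfolding B_def Pk_def G_def by (simp add: conj_assoc)
  have cardA: "real (card A) = real (n choose k) - real (G n k (f+1))"
  proof -
    have "A = Pk - B" unfolding A_def B_def by auto
    then have "card A = card Pk - card B" using fA by (simp add: card_Diff_subset B_def)
    moreover have "card B \<le> card Pk" using fPk by (rule card_mono) (auto simp: B_def)
    moreover have "card Pk = n choose k" unfolding Pk_def using C_eq C_def by simp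
    ultimately show ?thesis using cardB by simp
  qed
  have sumA: "(\<Sum>ps\<in>A. u powr level j0 ps - 1)
      = (if int n - \<lfloor>(real n + j0)/2\<rfloor> \<le> int k then (u powr (j0 + 2*real_of_int (int k) - real n) - 1) * (binom n (int k) - binom n (int k + \<lfloor>j0\<rfloor> + 1)) else 0)"
  proof -
    have "(\<Sum>ps\<in>A. u powr level j0 ps - 1) = (\<Sum>ps\<in>A. u powr (j0 + 2*real_of_int (int k) - real n) - 1)"
      using levA by simp
    also have "\<dots> = real (card A) * (u powr (j0 + 2*real_of_int (int k) - real n) - 1)" by simp
    also have "\<dots> = (if int n - \<lfloor>(real n + j0)/2\<rfloor> \<le> int k then (u powr (j0 + 2*real_of_int (int k) - real n) - 1) * (binom n (int k) - binom n (int k + \<lfloor>j0\<rfloor> + 1)) else 0)"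
      unfolding cardA kmin_iff using G_eq[of "f+1" n k] f0 by (simp add: f_def binom_nat add.assoc)
    finally show ?thesis .
  qed
  define g where "g ps = 2 * int k - int n - mp ps" for ps
  have levB: "\<And>ps. ps \<in> B \<Longrightarrow> level j0 ps = real_of_int (g ps)"
  proof -
    fix ps assume ps: "ps \<in> B"
    then have "ps \<in> Pk" "mp ps \<le> -f-1" unfolding B_def by auto
    then show "level j0 ps = real_of_int (g ps)"
      using level_eq[OF j0, of ps] smk[of ps] fj by (simp add: max_def g_def)
  qed
  have gB: "g ` B \<subseteq> {0..int n}"
  proof
    fix j assume "j \<in> g ` B"
    then obtain ps where ps: "ps \<in> B" "j = g ps" by auto
    then have "ps \<in> Pk" unfolding B_def by auto
    then show "j \<in> {0..int n}" using ps mpk[of ps] mp_le0[of ps] kn mp_le_sm[of ps] smk[of ps] unfolding g_def by auto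
  qed
  have cardBj: "real (card {ps \<in> B. g ps = j}) = (if 2*int k - int n + f + 1 \<le> j then binom n (int k - j) - binom n (int k - j - 1) else 0)"
    if j: "j \<in> {0..int n}" for j
  proof (cases "2*int k - int n + f + 1 \<le> j")
    case False
    then have "{ps \<in> B. g ps = j} = {}" unfolding B_def g_def by auto
    then have "card {ps \<in> B. g ps = j} = 0" by (simp only: card.empty)
    then show ?thesis using False by simp
  next
    case True
    define c where "c = j + int n - 2 * int k"
    have c1: "c \<ge> 1" "c \<ge> f + 1" using True f0 c_def by auto
    have "{ps \<in> B. g ps = j} = {ps \<in> Pk. mp ps \<le> -c} - {ps \<in> Pk. mp ps \<le> -(c+1)}"
      unfolding B_def g_def c_def using True by auto
    moreover have "card ({ps \<in> Pk. mp ps \<le> -c} - {ps \<in> Pk. mp ps \<le> -(c+1)}) = G n k c - G n k (c+1)"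
      by (subst card_Diff_subset) (auto intro: finite_subset[OF _ fPk] simp: G_def Pk_def conj_assoc)
    moreover have "G n k (c+1) \<le> G n k c" unfolding G_def
      by (rule card_mono) (auto intro: finite_lenP)
    ultimately have e: "real (card {ps \<in> B. g ps = j}) = real (G n k c) - real (G n k (c+1))" by simp
    have j0': "j \<ge> 0" using j by simp
    have g1: "real (G n k c) = binom n (int k - j)"
    proof (cases "j = 0")
      case True
      then show ?thesis using G_eq[of c n k] c1 c_def by (simp add: binom_nat)
    next
      case False
      then have "real (G n k c) = binom n (int k + c)" using G_eq[of c n k] c1 c_def j0' by simp
      also have "\<dots> = binom n (int k - j)" using binom_sym[of n "int k + c"] c_def by simp
      finally show ?thesis .
    qed
    have g2: "real (G n k (c+1)) = binom n (int k - j - 1)"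
    proof -
      have "real (G n k (c+1)) = binom n (int k + (c+1))" using G_eq[of "c+1" n k] c1 c_def j0' by simp
      also have "\<dots> = binom n (int k - j - 1)"
      proof -
        have e1: "int n - (int k + (c+1)) = int k - j - 1" using c_def by simp
        show ?thesis by (subst binom_sym) (simp only: e1)
      qed
      finally show ?thesis .
    qed
    show ?thesis using True e g1 g2 by simp
  qed
  have sumB: "(\<Sum>ps\<in>B. u powr level j0 ps - 1)
     = (\<Sum>j\<in>{0..int n}. if 2*int k - int n + \<lfloor>j0\<rfloor> + 1 \<le> j then (u powr real_of_int j - 1) * (binom n (int k - j) - binom n (int k - j - 1)) else 0)"
  proof -
    have "(\<Sum>ps\<in>B. u powr level j0 ps - 1) = (\<Sum>ps\<in>B. u powr real_of_int (g ps) - 1)"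
      using levB by simp
    also have "\<dots> = (\<Sum>j\<in>{0..int n}. \<Sum>ps\<in>{ps \<in> B. g ps = j}. u powr real_of_int (g ps) - 1)"
      by (rule sum.group[symmetric]) (use fA gB in auto)
    also have "\<dots> = (\<Sum>j\<in>{0..int n}. real (card {ps \<in> B. g ps = j}) * (u powr real_of_int j - 1))"
      by (rule sum.cong) auto
    also have "\<dots> = (\<Sum>j\<in>{0..int n}. if 2*int k - int n + \<lfloor>j0\<rfloor> + 1 \<le> j then (u powr real_of_int j - 1) * (binom n (int k - j) - binom n (int k - j - 1)) else 0)"
      by (rule sum.cong) (auto simp: cardBj f_def)
    finally show ?thesis .
  qed
  have "(\<Sum>ps\<in>Pk. u powr level j0 ps - 1) = (\<Sum>ps\<in>A. u powr level j0 ps - 1) + (\<Sum>ps\<in>B. u powr level j0 ps - 1)"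
    unfolding PAB(1) by (rule sum.union_disjoint) (use fA PAB in auto)
  then show ?thesis unfolding sumA sumB Pk_def .
qed



lemma int_sum: "(\<Sum>k\<in>{0..int n}. F k) = (\<Sum>k\<in>{0..n}. F (int k))"
proof -
  have "{0..int n} = int ` {0..n}" by (simp add: image_int_atLeastAtMost)
  then show ?thesis by (simp add: sum.reindex)
qed

lemma shift_sum:
  fixes F :: "int \<Rightarrow> real"
  assumes "\<And>k. a \<le> k \<Longrightarrow> k \<le> b \<Longrightarrow> k < 0 \<Longrightarrow> F k = 0" "b \<le> int n"
    "\<And>k. b < k \<Longrightarrow> k \<le> int n \<Longrightarrow> F k = 0"
  shows "(\<Sum>k\<in>{a..b}. F k) = (\<Sum>k\<in>{0..int n}. if a \<le> k then F k else 0)"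
  by (rule sum.mono_neutral_cong) (use assms in auto)

lemma lhs_eq:
  "(\<Sum>j\<in>reachJ j0 n. (u powr j - 1) *
            (\<Sum>k=0..n. real (Lambda j0 j k n) * (1 - q) ^ k * q ^ (n - k)))
   = (\<Sum>k=0..n. (1 - q) ^ k * q ^ (n - k) * (\<Sum>ps\<in>{ps. length ps = n \<and> count_list ps True = k}. u powr level j0 ps - 1))"
proof -
  define P where "P = {ps :: bool list. length ps = n}"
  define h where "h ps = (u powr level j0 ps - 1) * ((1 - q) ^ count_list ps True * q ^ (n - count_list ps True))" for ps
  have fP: "finite P" unfolding P_def by (rule finite_len)
  have rJ: "reachJ j0 n = level j0 ` P" unfolding reachJ_def P_def by auto
  have cnt: "\<And>ps. ps \<in> P \<Longrightarrow> count_list ps True \<in> {0..n}" unfolding P_def using count_le by fastforce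
  have "(\<Sum>ps\<in>P. h ps) = (\<Sum>j\<in>reachJ j0 n. \<Sum>ps\<in>{ps \<in> P. level j0 ps = j}. h ps)"
    by (rule sum.group[symmetric]) (use fP rJ in auto)
  also have "\<dots> = (\<Sum>j\<in>reachJ j0 n. (u powr j - 1) *
            (\<Sum>k=0..n. real (Lambda j0 j k n) * (1 - q) ^ k * q ^ (n - k)))"
  proof (rule sum.cong[OF refl])
    fix j assume "j \<in> reachJ j0 n"
    have "(\<Sum>ps\<in>{ps \<in> P. level j0 ps = j}. h ps)
       = (\<Sum>k\<in>{0..n}. \<Sum>ps\<in>{ps \<in> {ps \<in> P. level j0 ps = j}. count_list ps True = k}. h ps)"
      by (rule sum.group[symmetric]) (use fP cnt in auto)
    also have "\<dots> = (\<Sum>k\<in>{0..n}. (u powr j - 1) * (real (Lambda j0 j k n) * (1 - q) ^ k * q ^ (n - k)))"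
    proof (rule sum.cong[OF refl])
      fix k assume "k \<in> {0..n}"
      have e: "{ps \<in> {ps \<in> P. level j0 ps = j}. count_list ps True = k}
          = {ps :: bool list. length ps = n \<and> count_list ps True = k \<and> level j0 ps = j}"
        unfolding P_def by auto
      have "(\<Sum>ps\<in>{ps \<in> {ps \<in> P. level j0 ps = j}. count_list ps True = k}. h ps)
          = (\<Sum>ps\<in>{ps :: bool list. length ps = n \<and> count_list ps True = k \<and> level j0 ps = j}.
               (u powr j - 1) * ((1 - q) ^ k * q ^ (n - k)))"
        unfolding e h_def by (rule sum.cong) auto
      also have "\<dots> = (u powr j - 1) * (real (Lambda j0 j k n) * (1 - q) ^ k * q ^ (n - k))"
        by (simp add: Lambda_def)
      finally show "(\<Sum>ps\<in>{ps \<in> {ps \<in> P. level j0 ps = j}. count_list ps True = k}. h ps)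
          = (u powr j - 1) * (real (Lambda j0 j k n) * (1 - q) ^ k * q ^ (n - k))" .
    qed
    also have "\<dots> = (u powr j - 1) * (\<Sum>k=0..n. real (Lambda j0 j k n) * (1 - q) ^ k * q ^ (n - k))"
      by (simp add: sum_distrib_left)
    finally show "(\<Sum>ps\<in>{ps \<in> P. level j0 ps = j}. h ps) = (u powr j - 1) * (\<Sum>k=0..n. real (Lambda j0 j k n) * (1 - q) ^ k * q ^ (n - k))" .
  qed
  finally have L: "(\<Sum>ps\<in>P. h ps) = (\<Sum>j\<in>reachJ j0 n. (u powr j - 1) *
            (\<Sum>k=0..n. real (Lambda j0 j k n) * (1 - q) ^ k * q ^ (n - k)))" .
  have "(\<Sum>ps\<in>P. h ps) = (\<Sum>k\<in>{0..n}. \<Sum>ps\<in>{ps \<in> P. count_list ps True = k}. h ps)"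
    by (rule sum.group[symmetric]) (use fP cnt in auto)
  also have "\<dots> = (\<Sum>k=0..n. (1 - q) ^ k * q ^ (n - k) * (\<Sum>ps\<in>{ps. length ps = n \<and> count_list ps True = k}. u powr level j0 ps - 1))"
  proof (rule sum.cong[OF refl])
    fix k assume "k \<in> {0..n}"
    have e: "{ps \<in> P. count_list ps True = k} = {ps. length ps = n \<and> count_list ps True = k}"
      unfolding P_def by auto
    show "(\<Sum>ps\<in>{ps \<in> P. count_list ps True = k}. h ps) = (1 - q) ^ k * q ^ (n - k) * (\<Sum>ps\<in>{ps. length ps = n \<and> count_list ps True = k}. u powr level j0 ps - 1)"
      unfolding e h_def sum_distrib_left by (rule sum.cong) auto
  qed
  finally show ?thesis using L by simp
qed



lemma V3_inner:
  fixes j f :: int and G :: "int \<Rightarrow> real"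
  assumes f0: "f \<ge> 0" and j: "0 \<le> j" "j \<le> int n - f - 1"
  shows "(\<Sum>k\<in>{j .. \<lfloor>(real n - real_of_int f - 1 + real_of_int j) / 2\<rfloor>}.
               (binom n (k - j) - binom n (k - j - 1)) * G k)
       = (\<Sum>k\<in>{0..int n}. if 2*k - int n + f + 1 \<le> j then (binom n (k - j) - binom n (k - j - 1)) * G k else 0)"
proof (rule sum.mono_neutral_cong)
  have iff: "\<And>k. k \<le> \<lfloor>(real n - real_of_int f - 1 + real_of_int j) / 2\<rfloor> \<longleftrightarrow> 2*k - int n + f + 1 \<le> j"
  proof -
    fix k
    have "k \<le> \<lfloor>(real n - real_of_int f - 1 + real_of_int j) / 2\<rfloor> \<longleftrightarrow> real_of_int k \<le> (real n - real_of_int f - 1 + real_of_int j) / 2"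
      by (rule le_floor_iff)
    also have "\<dots> \<longleftrightarrow> real_of_int (2*k - int n + f + 1) \<le> real_of_int j" by (simp add: field_simps)
    also have "\<dots> \<longleftrightarrow> 2*k - int n + f + 1 \<le> j" by (rule of_int_le_iff)
    finally show "k \<le> \<lfloor>(real n - real_of_int f - 1 + real_of_int j) / 2\<rfloor> \<longleftrightarrow> 2*k - int n + f + 1 \<le> j" .
  qed
  show "\<And>i. i \<in> {0..int n} - {j..\<lfloor>(real n - real_of_int f - 1 + real_of_int j) / 2\<rfloor>} \<Longrightarrow>
         (if 2 * i - int n + f + 1 \<le> j then (binom n (i - j) - binom n (i - j - 1)) * G i else 0) = 0"
    using iff by (auto simp: binom_neg)
  show "\<And>i. i \<in> {j..\<lfloor>(real n - real_of_int f - 1 + real_of_int j) / 2\<rfloor>} - {0..int n} \<Longrightarrow>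
         (binom n (i - j) - binom n (i - j - 1)) * G i = 0"
    using iff j f0 by auto
  show "\<And>x. x \<in> {j..\<lfloor>(real n - real_of_int f - 1 + real_of_int j) / 2\<rfloor>} \<inter> {0..int n} \<Longrightarrow>
         (binom n (x - j) - binom n (x - j - 1)) * G x =
         (if 2 * x - int n + f + 1 \<le> j then (binom n (x - j) - binom n (x - j - 1)) * G x else 0)"
    using iff by auto
qed auto



theorem theorem2p3:
  fixes T t \<tau> r \<sigma> S M u d q j0 :: real and n :: nat
  assumes "T > 0" and "0 \<le> t" and "t < T" and "\<tau> = T - t"
    and "r \<ge> 0" and "\<sigma> > 0" and "n \<ge> 1"
    and "S > 0" and "M > 0" and "M \<ge> S"
    and u_def: "u = exp (\<sigma> * sqrt (\<tau> / n))"
    and d_def: "d = inverse u"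
    and q_def: "q = (u - exp (- r * \<tau> / n)) / (u - d)"
    and j0_def: "j0 = ln (M / S) / (\<sigma> * sqrt (\<tau> / n))"
  shows
    "S * (\<Sum>j\<in>reachJ j0 n. (u powr j - 1) *
            (\<Sum>k=0..n. real (Lambda j0 j k n) * (1 - q) ^ k * q ^ (n - k)))
     = S * (
         (\<Sum>k\<in>{int n - \<lfloor>(real n + j0) / 2\<rfloor> .. int n}.
            (u powr (j0 + 2 * real_of_int k - real n) - 1) * binom n k
              * (1 - q) powi k * q powi (int n - k))
       - (\<Sum>k\<in>{int n - \<lfloor>(real n + j0) / 2\<rfloor> .. int n - \<lfloor>j0\<rfloor> - 1}.
            (u powr (j0 + 2 * real_of_int k - real n) - 1) * binom n (k + \<lfloor>j0\<rfloor> + 1)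
              * (1 - q) powi k * q powi (int n - k))
       + (\<Sum>j\<in>{0 .. int n - \<lfloor>j0\<rfloor> - 1}.
            (u powr (real_of_int j) - 1) *
            (\<Sum>k\<in>{j .. \<lfloor>(real n - real_of_int \<lfloor>j0\<rfloor> - 1 + real_of_int j) / 2\<rfloor>}.
               (binom n (k - j) - binom n (k - j - 1)) * (1 - q) powi k * q powi (int n - k))))"
proof -
  have tau: "\<tau> > 0" using assms by simp
  have "sqrt (\<tau> / n) > 0" using tau assms by simp
  then have den: "\<sigma> * sqrt (\<tau> / n) > 0" using assms by simp
  have "ln (M / S) \<ge> 0" using assms by simp
  then have j0: "j0 \<ge> 0" unfolding j0_def using den by simp
  define f where "f = \<lfloor>j0\<rfloor>"
  have f0: "f \<ge> 0" using j0 f_def by simp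
  define kmin where "kmin = int n - \<lfloor>(real n + j0) / 2\<rfloor>"
  define W where "W k = (1 - q) powi k * q powi (int n - k)" for k :: int
  define D where "D j k = binom n (k - j) - binom n (k - j - 1)" for j k :: int
  define A where "A k = u powr (j0 + 2 * real_of_int k - real n) - 1" for k :: int
  have V1: "(\<Sum>k\<in>{kmin .. int n}. A k * binom n k * (1 - q) powi k * q powi (int n - k))
      = (\<Sum>k\<in>{0..int n}. if kmin \<le> k then A k * binom n k * W k else 0)"
    by (subst shift_sum[where n=n]) (auto simp: binom_neg W_def mult.assoc intro!: sum.cong)
  have V2: "(\<Sum>k\<in>{kmin .. int n - f - 1}. A k * binom n (k + f + 1) * (1 - q) powi k * q powi (int n - k))
      = (\<Sum>k\<in>{0..int n}. if kmin \<le> k then A k * binom n (k + f + 1) * W k else 0)"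
  proof (subst shift_sum[where n=n])
    show "\<And>k. kmin \<le> k \<Longrightarrow> k \<le> int n - f - 1 \<Longrightarrow> k < 0 \<Longrightarrow>
       A k * binom n (k + f + 1) * (1 - q) powi k * q powi (int n - k) = 0"
    proof -
      fix k assume k: "kmin \<le> k" "k \<le> int n - f - 1" "k < 0"
      have h1: "real_of_int (int n - \<lfloor>(real n + j0) / 2\<rfloor>) \<ge> real n - (real n + j0) / 2"
        using of_int_floor_le[of "(real n + j0) / 2"] by simp
      have h2: "real_of_int f > j0 - 1" using f_def by linarith
      show "A k * binom n (k + f + 1) * (1 - q) powi k * q powi (int n - k) = 0"
      proof -
        have a: "real_of_int kmin \<le> real_of_int k" using k(1) by simp
        have b: "real_of_int k \<le> real_of_int (int n - f - 1)" using k(2) by (simp only: of_int_le_iff)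
        have c: "real_of_int k < 0" using k(3) by simp
        have "False" using a b c h1 h2 unfolding kmin_def by simp
        then show ?thesis ..
      qed
    qed
  qed (insert f0, auto simp: binom_def W_def mult.assoc intro!: sum.cong)
  have V3a: "(\<Sum>j\<in>{0 .. int n - f - 1}. (u powr (real_of_int j) - 1) *
            (\<Sum>k\<in>{j .. \<lfloor>(real n - real_of_int f - 1 + real_of_int j) / 2\<rfloor>}.
               (binom n (k - j) - binom n (k - j - 1)) * (1 - q) powi k * q powi (int n - k)))
     = (\<Sum>j\<in>{0 .. int n - f - 1}. (u powr (real_of_int j) - 1) *
            (\<Sum>k\<in>{0..int n}. if 2*k - int n + f + 1 \<le> j then D j k * W k else 0))"
  proof (rule sum.cong[OF refl])
    fix j assume j: "j \<in> {0 .. int n - f - 1}"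
    have "(\<Sum>k\<in>{j .. \<lfloor>(real n - real_of_int f - 1 + real_of_int j) / 2\<rfloor>}.
               (binom n (k - j) - binom n (k - j - 1)) * (1 - q) powi k * q powi (int n - k))
         = (\<Sum>k\<in>{j .. \<lfloor>(real n - real_of_int f - 1 + real_of_int j) / 2\<rfloor>}.
               (binom n (k - j) - binom n (k - j - 1)) * W k)"
      by (simp add: W_def mult.assoc)
    also have "\<dots> = (\<Sum>k\<in>{0..int n}. if 2*k - int n + f + 1 \<le> j then D j k * W k else 0)"
      unfolding D_def by (rule V3_inner) (use j f0 in auto)
    finally show "(u powr (real_of_int j) - 1) *
            (\<Sum>k\<in>{j .. \<lfloor>(real n - real_of_int f - 1 + real_of_int j) / 2\<rfloor>}.
               (binom n (k - j) - binom n (k - j - 1)) * (1 - q) powi k * q powi (int n - k))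
       = (u powr (real_of_int j) - 1) * (\<Sum>k\<in>{0..int n}. if 2*k - int n + f + 1 \<le> j then D j k * W k else 0)"
      by simp
  qed
  have V3b: "(\<Sum>j\<in>{0 .. int n - f - 1}. (u powr (real_of_int j) - 1) *
            (\<Sum>k\<in>{0..int n}. if 2*k - int n + f + 1 \<le> j then D j k * W k else 0))
      = (\<Sum>j\<in>{0 .. int n}. (u powr (real_of_int j) - 1) *
            (\<Sum>k\<in>{0..int n}. if 2*k - int n + f + 1 \<le> j then D j k * W k else 0))"
  proof (rule sum.mono_neutral_left)
    show "\<forall>j\<in>{0..int n} - {0..int n - f - 1}. (u powr (real_of_int j) - 1) *
            (\<Sum>k\<in>{0..int n}. if 2*k - int n + f + 1 \<le> j then D j k * W k else 0) = 0"
    proof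
      fix j assume j: "j \<in> {0..int n} - {0..int n - f - 1}"
      have "\<And>k. k \<in> {0..int n} \<Longrightarrow> (if 2*k - int n + f + 1 \<le> j then D j k * W k else 0) = 0"
      proof -
        fix k assume k: "k \<in> {0..int n}"
        show "(if 2*k - int n + f + 1 \<le> j then D j k * W k else 0) = 0"
        proof (cases "2*k - int n + f + 1 \<le> j")
          case True
          then have "k - j < 0" using j k by auto
          then show ?thesis by (simp add: D_def binom_neg)
        qed simp
      qed
      then show "(u powr (real_of_int j) - 1) *
            (\<Sum>k\<in>{0..int n}. if 2*k - int n + f + 1 \<le> j then D j k * W k else 0) = 0" by simp
    qed
  qed (use f0 in auto)
  have V3c: "(\<Sum>j\<in>{0 .. int n}. (u powr (real_of_int j) - 1) *
            (\<Sum>k\<in>{0..int n}. if 2*k - int n + f + 1 \<le> j then D j k * W k else 0))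
      = (\<Sum>k\<in>{0..int n}. W k * (\<Sum>j\<in>{0 .. int n}. if 2*k - int n + f + 1 \<le> j then (u powr (real_of_int j) - 1) * D j k else 0))"
  proof -
    have "(\<Sum>j\<in>{0 .. int n}. (u powr (real_of_int j) - 1) *
            (\<Sum>k\<in>{0..int n}. if 2*k - int n + f + 1 \<le> j then D j k * W k else 0))
       = (\<Sum>j\<in>{0 .. int n}. \<Sum>k\<in>{0..int n}. if 2*k - int n + f + 1 \<le> j then W k * ((u powr (real_of_int j) - 1) * D j k) else 0)"
      by (auto simp: sum_distrib_left mult_ac intro!: sum.cong)
    also have "\<dots> = (\<Sum>k\<in>{0..int n}. \<Sum>j\<in>{0 .. int n}. if 2*k - int n + f + 1 \<le> j then W k * ((u powr (real_of_int j) - 1) * D j k) else 0)"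
      by (rule sum.swap)
    also have "\<dots> = (\<Sum>k\<in>{0..int n}. W k * (\<Sum>j\<in>{0 .. int n}. if 2*k - int n + f + 1 \<le> j then (u powr (real_of_int j) - 1) * D j k else 0))"
      by (auto simp: sum_distrib_left intro!: sum.cong)
    finally show ?thesis .
  qed
  define E where "E k = (if kmin \<le> k then A k * (binom n k - binom n (k + f + 1)) else 0)
      + (\<Sum>j\<in>{0 .. int n}. if 2*k - int n + f + 1 \<le> j then (u powr (real_of_int j) - 1) * D j k else 0)" for k
  have R: "(\<Sum>k\<in>{kmin .. int n}. A k * binom n k * (1 - q) powi k * q powi (int n - k))
       - (\<Sum>k\<in>{kmin .. int n - f - 1}. A k * binom n (k + f + 1) * (1 - q) powi k * q powi (int n - k))
       + (\<Sum>j\<in>{0 .. int n - f - 1}. (u powr (real_of_int j) - 1) *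
            (\<Sum>k\<in>{j .. \<lfloor>(real n - real_of_int f - 1 + real_of_int j) / 2\<rfloor>}.
               (binom n (k - j) - binom n (k - j - 1)) * (1 - q) powi k * q powi (int n - k)))
     = (\<Sum>k\<in>{0..int n}. W k * E k)"
    unfolding V1 V2 V3a V3b V3c
    unfolding sum_subtractf[symmetric] sum.distrib[symmetric]
  proof (rule sum.cong[OF refl])
    fix k assume "k \<in> {0..int n}"
    show "(if kmin \<le> k then A k * binom n k * W k else 0) - (if kmin \<le> k then A k * binom n (k + f + 1) * W k else 0) +
          W k * (\<Sum>j\<in>{0 .. int n}. if 2*k - int n + f + 1 \<le> j then (u powr (real_of_int j) - 1) * D j k else 0)
        = W k * E k"
      unfolding E_def by (cases "kmin \<le> k") (simp_all add: algebra_simps)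
  qed
  have R2: "(\<Sum>k\<in>{0..int n}. W k * E k) = (\<Sum>k=0..n. (1 - q) ^ k * q ^ (n - k) * (\<Sum>ps\<in>{ps. length ps = n \<and> count_list ps True = k}. u powr level j0 ps - 1))"
    unfolding int_sum
  proof (rule sum.cong[OF refl])
    fix k assume k: "k \<in> {0..n}"
    have "W (int k) = (1 - q) ^ k * q ^ (n - k)"
    proof -
      have e: "int n - int k = int (n - k)" using k by simp
      show ?thesis unfolding W_def e power_int_of_nat ..
    qed
    moreover have "E (int k) = (\<Sum>ps\<in>{ps. length ps = n \<and> count_list ps True = k}. u powr level j0 ps - 1)"
    proof -
      have pk: "(\<Sum>ps\<in>{ps. length ps = n \<and> count_list ps True = k}. u powr level j0 ps - 1)
   = (if int n - \<lfloor>(real n + j0)/2\<rfloor> \<le> int k then (u powr (j0 + 2*real_of_int (int k) - real n) - 1) * (binom n (int k) - binom n (int k + \<lfloor>j0\<rfloor> + 1)) else 0)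
   + (\<Sum>j\<in>{0..int n}. if 2*int k - int n + \<lfloor>j0\<rfloor> + 1 \<le> j then (u powr real_of_int j - 1) * (binom n (int k - j) - binom n (int k - j - 1)) else 0)"
        by (rule perk[OF j0]) (use k in simp)
      show ?thesis unfolding E_def A_def D_def kmin_def f_def using pk by (rule sym)
    qed
    ultimately show "W (int k) * E (int k) = (1 - q) ^ k * q ^ (n - k) * (\<Sum>ps\<in>{ps. length ps = n \<and> count_list ps True = k}. u powr level j0 ps - 1)"
      by simp
  qed
  note R' = R[unfolded A_def kmin_def f_def]
  show ?thesis
    unfolding lhs_eq R' R2 by (rule refl)
qed

end
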